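(* Let $G=(V,E)$ be a finite graph with boundary $B\subseteq V$, $|B|\ge2$. Let $d_1\le\cdots\le d_{|B|}$ be the degrees in $G$ of the boundary vertices, and let $d_1'\le\cdots\le d_{|B|}'$ be the degree sequence of the induced subgraph $G'=(B,E(B,B))$. Let $S_1=\sum_{i=1}^{|B|}d_i$, $S_2=\sum_{i=1}^{|B|}d_i^2$, $S_1'=\sum_{i=1}^{|B|}d_i'$. Then for $k=1,2,\ldots,|B|$, $$\sigma_k(G,B)\le\frac{1}{|B|}\left\{S_1+\sqrt{\frac{k-1}{|B|-k+1}\Big[|B|(S_2+S_1')-S_1^2\Big]}\right\}\le\frac{1}{|B|}\left\{S_1+\sqrt{\frac{k-1}{|B|-k+1}\Big[|B|(S_2+S_1)-S_1^2\Big]}\right\}.$$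
   Context: A boundary is $B\subseteq V$ with $|B|\ge2$. $E(B,B)$ is the set of edges of $G$ with both endpoints in $B$. Rayleigh quotient: $R(f)=\frac{\sum_{\{x,y\}\in E}(f(x)-f(y))^2}{\sum_{x\in B}f(x)^2}$ ($+\infty$ if $f|_B=0$); for $1\le k\le|B|$, $\sigma_k(G,B)=\min_{W\subseteq\mathbb{R}^V,\dim W=k}\max_{0\ne f\in W}R(f)$. *)

theory Defs
  imports "HOL-Analysis.Analysis"
begin

text \<open>A finite simple graph on the finite vertex type 'v (V = UNIV):
  edges are 2-element subsets of the vertex set.\<close>
definition simple_graph :: "'v set set \<Rightarrow> bool" where
  "simple_graph E \<longleftrightarrow> (\<forall>e\<in>E. card e = 2)"

definition degree :: "'v set set \<Rightarrow> 'v \<Rightarrow> nat" where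
  "degree E v = card {e\<in>E. v \<in> e}"

definition induced_edges :: "'v set set \<Rightarrow> 'v set \<Rightarrow> 'v set set" where
  "induced_edges E B = {e\<in>E. e \<subseteq> B}"

text \<open>Rayleigh quotient; +infinity if f vanishes on B.  Each edge {x,y}
  contributes (f x - f y)^2, written symmetrically over the ordered pairs.\<close>
definition rayleigh :: "('v::finite) set set \<Rightarrow> 'v set \<Rightarrow> (real^'v) \<Rightarrow> ereal" where
  "rayleigh E B f =
     (if (\<forall>x\<in>B. f $ x = 0) then \<infinity>
      else ereal ((\<Sum>e\<in>E. (\<Sum>(x,y)\<in>{(x,y). x \<in> e \<and> y \<in> e \<and> x \<noteq> y}. (f $ x - f $ y)^2) / 2)
                  / (\<Sum>x\<in>B. (f $ x)^2)))"

definition steklov_eig :: "('v::finite) set set \<Rightarrow> 'v set \<Rightarrow> nat \<Rightarrow> ereal" where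
  "steklov_eig E B k =
     (INF W\<in>{W :: (real^'v) set. subspace W \<and> dim W = k}.
        (SUP f\<in>W - {0}. rayleigh E B f))"

end

theory Submission
  imports Defs
begin


lemma quad_nonneg_zero:
  fixes c d :: real
  assumes "\<forall>t. 0 \<le> 2*t*c + t^2 * d" and "0 \<le> d"
  shows "c = 0"
proof -
  define t where "t = -c/(d+1)"
  have "0 \<le> 2*t*c + t^2 * d" using assms(1) by blast
  hence "0 \<le> (d+1)^2 * (2*t*c + t^2 * d)" by simp
  also have "(d+1)^2 * (2*t*c + t^2 * d) = 2*c*(t*(d+1))*(d+1) + (t*(d+1))^2*d"
    by (simp add: algebra_simps power2_eq_square)
  also have "t*(d+1) = -c" unfolding t_def using assms(2) by simp
  also have "2*c*(-c)*(d+1) + (-c)^2*d = -(c^2 * (d+2))" by (simp add: algebra_simps power2_eq_square)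
  finally have "c^2 * (d+2) \<le> 0" by simp
  hence "c^2 \<le> 0" using assms(2) by (simp add: mult_le_0_iff)
  thus ?thesis by simp
qed

lemma spectral_aux:
  fixes A :: "'a::euclidean_space \<Rightarrow> 'a"
  assumes lin: "linear A" and sym: "\<And>x y. A x \<bullet> y = x \<bullet> A y"
  shows "subspace S \<Longrightarrow> (\<And>x. x\<in>S \<Longrightarrow> A x \<in> S) \<Longrightarrow>
    \<exists>U. U \<subseteq> S \<and> pairwise orthogonal U \<and> (\<forall>u\<in>U. norm u = 1) \<and> S \<subseteq> span U
        \<and> (\<forall>u\<in>U. A u = (u \<bullet> A u) *\<^sub>R u)"
proof (induction "dim S" arbitrary: S rule: less_induct)
  case less
  note sub = less.prems(1) and inv = less.prems(2)
  show ?case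
  proof (cases "S = {0}")
    case True then show ?thesis by (intro exI[of _ "{}"]) auto
  next
    case False
    then obtain z where z: "z \<in> S" "z \<noteq> 0" using sub subspace_0 by blast
    let ?K = "S \<inter> sphere 0 1"
    have "(1/norm z) *\<^sub>R z \<in> ?K" using z sub by (auto simp: subspace_scale)
    hence Kne: "?K \<noteq> {}" by blast
    have Kc: "compact ?K" by (intro closed_Int_compact closed_subspace sub compact_sphere)
    have cont: "continuous_on ?K (\<lambda>x. x \<bullet> A x)"
      by (intro continuous_intros linear_continuous_on) (use lin linear_conv_bounded_linear in auto)
    obtain u where u: "u \<in> ?K" "\<forall>y\<in>?K. u \<bullet> A u \<le> y \<bullet> A y"
      using continuous_attains_inf[OF Kc Kne cont] by blast
    define l where "l = u \<bullet> A u"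
    have uS: "u \<in> S" and nu: "norm u = 1" using u by auto
    have uu: "u \<bullet> u = 1" using nu by (simp add: norm_eq_1)
    have ge: "l * (x \<bullet> x) \<le> x \<bullet> A x" if xS: "x \<in> S" for x
    proof (cases "x = 0")
      case True then show ?thesis using linear_0[OF lin] by simp
    next
      case False
      let ?y = "(1/norm x) *\<^sub>R x"
      have "?y \<in> ?K" using xS False sub by (auto simp: subspace_scale)
      hence "l \<le> ?y \<bullet> A ?y" using u(2) l_def by blast
      also have "?y \<bullet> A ?y = (x \<bullet> A x) / (norm x)^2"
        using linear_cmul[OF lin] by (simp add: power2_eq_square)
      finally have "l * (norm x)^2 \<le> x \<bullet> A x" using False by (simp add: field_simps)
      thus ?thesis by (simp add: power2_norm_eq_inner)
    qed
    define w where "w = A u - l *\<^sub>R u"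
    have wS: "w \<in> S" unfolding w_def using uS inv sub by (auto intro: subspace_diff subspace_scale)
    have "\<forall>t. 0 \<le> 2*t*(w \<bullet> w) + t^2 * (w \<bullet> A w - l*(w \<bullet> w))"
    proof
      fix t
      have S1: "u + t *\<^sub>R w \<in> S" using uS wS sub by (auto intro: subspace_add subspace_scale)
      have g: "l * ((u + t *\<^sub>R w) \<bullet> (u + t *\<^sub>R w)) \<le> (u + t *\<^sub>R w) \<bullet> A (u + t *\<^sub>R w)"
        using ge[OF S1] .
      have "A (u + t *\<^sub>R w) = A u + t *\<^sub>R A w" using lin by (simp add: linear_add linear_cmul)
      hence e1: "(u + t *\<^sub>R w) \<bullet> A (u + t *\<^sub>R w) = u \<bullet> A u + t * (u \<bullet> A w) + t * (w \<bullet> A u) + t^2 * (w \<bullet> A w)"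
        by (simp add: inner_add_left inner_add_right power2_eq_square algebra_simps)
      have "u \<bullet> A w = A u \<bullet> w" using sym by simp
      hence uw: "u \<bullet> A w = w \<bullet> w + l * (u \<bullet> w)" "w \<bullet> A u = w \<bullet> w + l * (u \<bullet> w)"
        unfolding w_def by (simp_all add: inner_diff_left inner_diff_right inner_commute algebra_simps)
      have e2: "(u + t *\<^sub>R w) \<bullet> (u + t *\<^sub>R w) = 1 + 2*t*(u \<bullet> w) + t^2 * (w \<bullet> w)"
        using uu by (simp add: inner_add_left inner_add_right power2_eq_square inner_commute)
      have "(u + t *\<^sub>R w) \<bullet> A (u + t *\<^sub>R w) - l * ((u + t *\<^sub>R w) \<bullet> (u + t *\<^sub>R w))
         = 2*t*(w \<bullet> w) + t^2 * (w \<bullet> A w - l*(w \<bullet> w))"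
        unfolding e1 e2 uw l_def by (simp add: algebra_simps)
      with g show "0 \<le> 2*t*(w \<bullet> w) + t^2 * (w \<bullet> A w - l*(w \<bullet> w))" by linarith
    qed
    moreover have "0 \<le> w \<bullet> A w - l*(w \<bullet> w)" using ge[OF wS] by simp
    ultimately have "w \<bullet> w = 0" by (rule quad_nonneg_zero)
    hence eig: "A u = l *\<^sub>R u" unfolding w_def by simp
    define S' where "S' = S \<inter> {x. u \<bullet> x = 0}"
    have sub': "subspace S'" unfolding S'_def by (intro subspace_inter sub subspace_hyperplane)
    have inv': "A x \<in> S'" if "x \<in> S'" for x
    proof -
      have "u \<bullet> A x = A u \<bullet> x" using sym by simp
      also have "\<dots> = 0" using that eig by (simp add: S'_def)
      finally show ?thesis using that inv by (simp add: S'_def)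
    qed
    have "u \<notin> S'" using uu by (simp add: S'_def)
    hence "S' \<subset> S" using uS unfolding S'_def by blast
    hence "dim S' < dim S" using dim_psubset sub sub' by (metis span_eq_iff)
    from less.hyps[OF this sub' inv'] obtain U' where U':
      "U' \<subseteq> S'" "pairwise orthogonal U'" "\<forall>u\<in>U'. norm u = 1" "S' \<subseteq> span U'"
      "\<forall>u\<in>U'. A u = (u \<bullet> A u) *\<^sub>R u" by blast
    show ?thesis
    proof (intro exI[of _ "insert u U'"] conjI)
      show "insert u U' \<subseteq> S" using U'(1) uS S'_def by auto
      show "pairwise orthogonal (insert u U')"
        using U'(1,2) by (intro pairwise_orthogonal_insert) (auto simp: S'_def orthogonal_def)
      show "\<forall>v\<in>insert u U'. norm v = 1" using U'(3) nu by auto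
      show "\<forall>v\<in>insert u U'. A v = (v \<bullet> A v) *\<^sub>R v" using U'(5) eig l_def by auto
      show "S \<subseteq> span (insert u U')"
      proof
        fix x assume xS: "x \<in> S"
        have "x - (u \<bullet> x) *\<^sub>R u \<in> S'" using xS uS sub uu
          by (auto simp: S'_def inner_diff_right intro: subspace_diff subspace_scale)
        hence "x - (u \<bullet> x) *\<^sub>R u \<in> span U'" using U'(4) by blast
        hence "x - (u \<bullet> x) *\<^sub>R u \<in> span (insert u U')" by (meson span_mono subset_insertI subsetD)
        moreover have "(u \<bullet> x) *\<^sub>R u \<in> span (insert u U')" by (simp add: span_base span_scale)
        ultimately have "x - (u \<bullet> x) *\<^sub>R u + (u \<bullet> x) *\<^sub>R u \<in> span (insert u U')" by (rule span_add)
        thus "x \<in> span (insert u U')" by simp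
      qed
    qed
  qed
qed



lemma ws_count:
  fixes U :: "'a set" and lam :: "'a \<Rightarrow> real" and k :: nat
  assumes fin: "finite U" and k1: "1 \<le> k" and kn: "k \<le> card U"
  defines "n \<equiv> real (card U)"
  defines "T1 \<equiv> (\<Sum>u\<in>U. lam u)" and "T2 \<equiv> (\<Sum>u\<in>U. (lam u)^2)"
  defines "t \<equiv> (T1 + sqrt ((real k - 1) / (n - real k + 1) * (n * T2 - T1^2))) / n"
  shows "k \<le> card {u\<in>U. lam u \<le> t}"
proof (rule ccontr)
  assume "\<not> k \<le> card {u\<in>U. lam u \<le> t}"
  hence pk: "card {u\<in>U. lam u \<le> t} < k" by simp
  define L where "L = {u\<in>U. lam u \<le> t}"
  define H where "H = U - L"
  have n0: "n > 0" using kn k1 unfolding n_def by simp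
  define m where "m = T1 / n"
  define V where "V = (\<Sum>u\<in>U. (lam u - m)^2)"
  have "V = T2 - 2*m*T1 + n * m^2"
    unfolding V_def T1_def T2_def n_def
    by (simp add: power2_eq_square algebra_simps sum.distrib sum_subtractf sum_distrib_left sum_distrib_right)
  hence Veq: "V = T2 - T1^2/n" unfolding m_def using n0 by (simp add: field_simps power2_eq_square)
  have V0: "0 \<le> V" unfolding V_def by (simp add: sum_nonneg)
  have nV: "n * T2 - T1^2 = n * V" using Veq n0 by (simp add: field_simps)
  define x where "x = sqrt ((real k - 1) / (n - real k + 1) * (n * V)) / n"
  have cnn: "0 \<le> (real k - 1) / (n - real k + 1)" using k1 kn unfolding n_def by simp
  have "0 \<le> (real k - 1) / (n - real k + 1) * (n * V)" using cnn V0 n0 by (intro mult_nonneg_nonneg) auto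
  hence x0: "0 \<le> x" unfolding x_def using n0 by simp
  have tx: "t = m + x" unfolding t_def x_def m_def nV by (simp add: add_divide_distrib)
  have kk: "real k - 1 \<ge> 0" "n - real k + 1 > 0" using k1 kn unfolding n_def by auto
  have nn: "0 \<le> (real k - 1) / (n - real k + 1) * (n * V)" using cnn V0 n0 by (intro mult_nonneg_nonneg) auto
  have "x^2 = ((real k - 1) / (n - real k + 1) * (n * V)) / n^2"
    unfolding x_def using nn by (simp add: power_divide)
  also have "\<dots> = (real k - 1) / (n - real k + 1) * ((n * V) / n^2)" by simp
  also have "(n * V) / n^2 = V / n" using n0 by (simp add: power2_eq_square)
  also have "(real k - 1) / (n - real k + 1) * (V / n) = (real k - 1) / (n - real k + 1) * V / n" by simp
  finally have x2: "x^2 = (real k - 1) / (n - real k + 1) * V / n" .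
  have LU: "L \<subseteq> U" and HU: "H \<subseteq> U" unfolding L_def H_def by auto
  have finL: "finite L" and finH: "finite H" using fin LU HU finite_subset by auto
  define p where "p = real (card L)"
  define h where "h = real (card H)"
  have cardH: "card H = card U - card L" unfolding H_def using fin LU by (simp add: card_Diff_subset finite_subset)
  have pk': "p \<le> real k - 1" using pk unfolding p_def L_def by simp
  have hp: "h = n - p" unfolding h_def p_def n_def cardH using card_mono[OF fin LU] by simp
  have hk: "h \<ge> n - real k + 1" using hp pk' by simp
  have h1: "h \<ge> 1" using hk kn unfolding n_def by simp
  have Hne: "H \<noteq> {}" using h1 unfolding h_def by auto
  have tot: "(\<Sum>u\<in>U. lam u - m) = 0" unfolding m_def T1_def using n0
    by (simp add: sum_subtractf n_def)
  have split: "(\<Sum>u\<in>U. lam u - m) = (\<Sum>u\<in>L. lam u - m) + (\<Sum>u\<in>H. lam u - m)"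
    unfolding H_def using sum.subset_diff[OF LU fin] by (simp add: add.commute)
  have split2: "V = (\<Sum>u\<in>L. (lam u - m)^2) + (\<Sum>u\<in>H. (lam u - m)^2)"
    unfolding V_def H_def using sum.subset_diff[OF LU fin] by (simp add: add.commute)
  have "(\<Sum>u\<in>H. x) < (\<Sum>u\<in>H. lam u - m)"
    using sum_strict_mono[OF finH Hne, of "\<lambda>_. x" "\<lambda>u. lam u - m"] unfolding H_def L_def tx
    by force
  hence sH: "h * x < (\<Sum>u\<in>H. lam u - m)" unfolding h_def by simp
  define \<sigma> where "\<sigma> = (\<Sum>u\<in>H. lam u - m)"
  have sL: "(\<Sum>u\<in>L. lam u - m) = - \<sigma>" using tot split unfolding \<sigma>_def by simp
  have sig0: "\<sigma> > 0" using sH x0 h1 \<sigma>_def by (smt (verit) mult_nonneg_nonneg)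
  show False
  proof (cases "p = 0")
    case True
    hence "L = {}" using finL unfolding p_def by simp
    thus False using sL sig0 by simp
  next
    case False
    hence p0: "p > 0" unfolding p_def by simp
    have CL: "\<sigma>^2 \<le> (\<Sum>u\<in>L. (lam u - m)^2) * p"
      using sum_squared_le_sum_of_squares[of "\<lambda>u. lam u - m" L] sL unfolding p_def by simp
    have CH: "\<sigma>^2 \<le> (\<Sum>u\<in>H. (lam u - m)^2) * h"
      using sum_squared_le_sum_of_squares[of "\<lambda>u. lam u - m" H] unfolding h_def \<sigma>_def by simp
    have "\<sigma>^2 / p + \<sigma>^2 / h \<le> V" using CL CH split2 p0 h1
      by (simp add: divide_le_eq add_mono)
    moreover have "\<sigma>^2 / p + \<sigma>^2 / h = \<sigma>^2 * (h + p) / (p * h)" using p0 h1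
      by (simp add: field_simps)
    moreover have "h + p = n" using hp by simp
    moreover have "(h*x)^2 < \<sigma>^2" using sH x0 h1 \<sigma>_def
      by (smt (verit) mult_nonneg_nonneg power_strict_mono zero_less_numeral)
    ultimately have "(h*x)^2 * n / (p * h) < V" using p0 h1 n0
      by (smt (verit) divide_strict_right_mono mult_pos_pos mult_strict_right_mono)
    hence A: "h * x^2 * n / p < V" using h1 by (simp add: power2_eq_square field_simps)
    have k2: "real k - 1 > 0" using p0 pk' by simp
    have "(n - real k + 1) * x^2 * n / (real k - 1) = V"
    proof -
      have gen: "\<And>a c. a \<noteq> 0 \<Longrightarrow> c \<noteq> 0 \<Longrightarrow> c * (a / c * V / n) * n / a = V" using n0 by (simp add: field_simps)
      show ?thesis unfolding x2 using gen[of "real k - 1" "n - real k + 1"] k2 kk by simp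
    qed
    moreover have "(n - real k + 1) * x^2 * n / (real k - 1) \<le> h * x^2 * n / p"
    proof -
      have "(n - real k + 1) * p \<le> h * (real k - 1)"
        using hk pk' p0 h1 by (smt (verit) mult_mono)
      hence "(n - real k + 1) / (real k - 1) \<le> h / p" using k2 p0 by (simp add: field_simps)
      hence "(n - real k + 1) / (real k - 1) * (x^2 * n) \<le> h / p * (x^2 * n)"
        using n0 by (intro mult_right_mono) auto
      thus ?thesis by (simp add: field_simps)
    qed
    ultimately show False using A by simp
  qed
qed



lemma swap3: "(\<Sum>u\<in>U. \<Sum>x\<in>B. \<Sum>y\<in>C. g u x y) = (\<Sum>x\<in>B. \<Sum>y\<in>C. \<Sum>u\<in>U. (g u x y :: real))"
proof -
  have "(\<Sum>u\<in>U. \<Sum>x\<in>B. \<Sum>y\<in>C. g u x y) = (\<Sum>x\<in>B. \<Sum>u\<in>U. \<Sum>y\<in>C. g u x y)" by (rule sum.swap)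
  also have "\<dots> = (\<Sum>x\<in>B. \<Sum>y\<in>C. \<Sum>u\<in>U. g u x y)" by (rule sum.cong[OF refl], rule sum.swap)
  finally show ?thesis .
qed

lemma swap4: "(\<Sum>u\<in>U. \<Sum>x\<in>B. \<Sum>y\<in>C. \<Sum>z\<in>D. g u x y z) = (\<Sum>x\<in>B. \<Sum>y\<in>C. \<Sum>z\<in>D. \<Sum>u\<in>U. (g u x y z :: real))"
proof -
  have "(\<Sum>u\<in>U. \<Sum>x\<in>B. \<Sum>y\<in>C. \<Sum>z\<in>D. g u x y z) = (\<Sum>x\<in>B. \<Sum>y\<in>C. \<Sum>u\<in>U. \<Sum>z\<in>D. g u x y z)" by (rule swap3)
  also have "\<dots> = (\<Sum>x\<in>B. \<Sum>y\<in>C. \<Sum>z\<in>D. \<Sum>u\<in>U. g u x y z)" by (intro sum.cong[OF refl], rule sum.swap)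
  finally show ?thesis .
qed

lemma trace_facts:
  fixes M :: "'v::finite \<Rightarrow> 'v \<Rightarrow> real" and U :: "(real^'v) set" and Aop :: "real^'v \<Rightarrow> real^'v"
  assumes Aop: "\<And>f. Aop f = (\<chi> x. if x\<in>B then (\<Sum>y\<in>B. M x y * f$y) else 0)"
    and US: "\<And>u. u \<in> U \<Longrightarrow> (\<forall>x. x \<notin> B \<longrightarrow> u$x = 0)"
    and orth: "pairwise orthogonal U" and nrm: "\<forall>u\<in>U. norm u = 1"
    and span: "\<And>f. (\<forall>x. x \<notin> B \<longrightarrow> f$x = 0) \<Longrightarrow> f \<in> span U"
    and eig: "\<forall>u\<in>U. Aop u = (u \<bullet> Aop u) *\<^sub>R u"
  shows "card U = card B"
    and "(\<Sum>u\<in>U. u \<bullet> Aop u) = (\<Sum>x\<in>B. M x x)"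
    and "(\<Sum>u\<in>U. (u \<bullet> Aop u)^2) = (\<Sum>x\<in>B. \<Sum>y\<in>B. (M x y)^2)"
proof -
  have finU: "finite U" using orth pairwise_orthogonal_imp_finite by blast
  have delta: "(\<Sum>u\<in>U. u$x * u$y) = (if x = y then 1 else 0)" if yB: "y \<in> B" for x y
  proof -
    have "axis y (1::real) \<in> span U" using yB by (intro span) (auto simp: axis_def)
    hence "(\<Sum>u\<in>U. (axis y 1 \<bullet> u) *\<^sub>R u) = axis y (1::real)"
      using orthonormal_basis_expand[OF orth _ _ finU] nrm by blast
    hence "(\<Sum>u\<in>U. (axis y 1 \<bullet> u) *\<^sub>R u) $ x = axis y (1::real) $ x" by simp
    moreover have ax: "\<And>u. axis y (1::real) \<bullet> u = u $ y" by (simp add: inner_commute inner_axis)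
    ultimately show ?thesis by (simp add: ax mult.commute axis_def)
  qed
  have inB: "u \<bullet> v = (\<Sum>x\<in>B. u$x * v$x)" if "u \<in> U" for u v
    using US[OF that] by (simp add: inner_vec_def sum.mono_neutral_right[of UNIV B] )
  show "card U = card B"
  proof -
    have "real (card U) = (\<Sum>u\<in>U. u \<bullet> u)" using nrm by (simp add: norm_eq_1)
    also have "\<dots> = (\<Sum>u\<in>U. \<Sum>x\<in>B. u$x * u$x)" using inB by simp
    also have "\<dots> = (\<Sum>x\<in>B. \<Sum>u\<in>U. u$x * u$x)" by (rule sum.swap)
    also have "\<dots> = real (card B)" using delta by simp
    finally show ?thesis by simp
  qed
  have Ax: "(Aop u) $ x = (\<Sum>y\<in>B. M x y * u$y)" if "x \<in> B" for u x
    using that by (simp add: Aop)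
  have q: "u \<bullet> Aop u = (\<Sum>x\<in>B. \<Sum>y\<in>B. M x y * (u$x * u$y))" if "u \<in> U" for u
    using inB[OF that] Ax by (simp add: sum_distrib_left algebra_simps)
  show "(\<Sum>u\<in>U. u \<bullet> Aop u) = (\<Sum>x\<in>B. M x x)"
  proof -
    have "(\<Sum>u\<in>U. u \<bullet> Aop u) = (\<Sum>u\<in>U. \<Sum>x\<in>B. \<Sum>y\<in>B. M x y * (u$x * u$y))" using q by simp
    also have "\<dots> = (\<Sum>x\<in>B. \<Sum>y\<in>B. \<Sum>u\<in>U. M x y * (u$x * u$y))"
      by (rule swap3)
    also have "\<dots> = (\<Sum>x\<in>B. \<Sum>y\<in>B. M x y * (\<Sum>u\<in>U. u$x * u$y))"
      by (simp add: sum_distrib_left)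
    also have "\<dots> = (\<Sum>x\<in>B. \<Sum>y\<in>B. M x y * (if x = y then 1 else 0))"
      using delta by simp
    also have "\<dots> = (\<Sum>x\<in>B. M x x)" by (simp add: if_distrib cong: if_cong)
    finally show ?thesis .
  qed
  have sq: "(u \<bullet> Aop u)^2 = (\<Sum>x\<in>B. \<Sum>y\<in>B. \<Sum>z\<in>B. M x y * M x z * (u$y * u$z))" if "u \<in> U" for u
  proof -
    have "(u \<bullet> Aop u)^2 = Aop u \<bullet> Aop u"
      using eig that nrm by (metis inner_scaleR_left inner_scaleR_right mult.right_neutral norm_eq_1 power2_eq_square mult.commute)
    also have "\<dots> = (\<Sum>x\<in>B. ((Aop u)$x)^2)"
      by (simp add: inner_vec_def Aop power2_eq_square sum.mono_neutral_right[of UNIV B])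
    also have "\<dots> = (\<Sum>x\<in>B. (\<Sum>y\<in>B. M x y * u$y)^2)" using Ax by simp
    also have "\<dots> = (\<Sum>x\<in>B. \<Sum>y\<in>B. \<Sum>z\<in>B. M x y * M x z * (u$y * u$z))"
      by (simp add: power2_eq_square sum_product algebra_simps)
    finally show ?thesis .
  qed
  show "(\<Sum>u\<in>U. (u \<bullet> Aop u)^2) = (\<Sum>x\<in>B. \<Sum>y\<in>B. (M x y)^2)"
  proof -
    have "(\<Sum>u\<in>U. (u \<bullet> Aop u)^2) = (\<Sum>u\<in>U. \<Sum>x\<in>B. \<Sum>y\<in>B. \<Sum>z\<in>B. M x y * M x z * (u$y * u$z))"
      using sq by simp
    also have "\<dots> = (\<Sum>x\<in>B. \<Sum>y\<in>B. \<Sum>z\<in>B. \<Sum>u\<in>U. M x y * M x z * (u$y * u$z))"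
      by (rule swap4)
    also have "\<dots> = (\<Sum>x\<in>B. \<Sum>y\<in>B. \<Sum>z\<in>B. M x y * M x z * (\<Sum>u\<in>U. u$y * u$z))"
      by (simp add: sum_distrib_left)
    also have "\<dots> = (\<Sum>x\<in>B. \<Sum>y\<in>B. \<Sum>z\<in>B. M x y * M x z * (if y = z then 1 else 0))"
      using delta by simp
    also have "\<dots> = (\<Sum>x\<in>B. \<Sum>y\<in>B. (M x y)^2)" by (simp add: if_distrib power2_eq_square cong: if_cong)
    finally show ?thesis .
  qed
qed



definition adj :: "'v set set \<Rightarrow> 'v \<Rightarrow> 'v \<Rightarrow> real" where
  "adj E x y = (if {x,y} \<in> E \<and> x \<noteq> y then 1 else 0)"

lemma adj_sym: "adj E x y = adj E y x" by (simp add: adj_def insert_commute eq_commute)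
lemma adj_diag[simp]: "adj E x x = 0" by (simp add: adj_def)
lemma adj_sq: "(adj E x y)^2 = adj E x y" by (simp add: adj_def)

lemma card_deg:
  assumes sg: "simple_graph E"
  shows "card {e\<in>E. v\<in>e \<and> R e} = card {y. {v,y}\<in>E \<and> v\<noteq>y \<and> R {v,y}}"
proof -
  have "bij_betw (\<lambda>y. {v,y}) {y. {v,y}\<in>E \<and> v\<noteq>y \<and> R {v,y}} {e\<in>E. v\<in>e \<and> R e}"
  proof (rule bij_betwI')
    fix y y' assume "y \<in> {y. {v,y}\<in>E \<and> v\<noteq>y \<and> R {v,y}}" "y' \<in> {y. {v,y}\<in>E \<and> v\<noteq>y \<and> R {v,y}}"
    thus "({v,y} = {v,y'}) = (y = y')" by (auto simp: doubleton_eq_iff)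
  next
    fix y assume "y \<in> {y. {v,y}\<in>E \<and> v\<noteq>y \<and> R {v,y}}"
    thus "{v,y} \<in> {e\<in>E. v\<in>e \<and> R e}" by auto
  next
    fix e assume e: "e \<in> {e\<in>E. v\<in>e \<and> R e}"
    hence "card e = 2" using sg by (auto simp: simple_graph_def)
    then obtain a b where ab: "e = {a,b}" "a \<noteq> b" by (auto simp: card_2_iff)
    show "\<exists>y\<in>{y. {v,y}\<in>E \<and> v\<noteq>y \<and> R {v,y}}. e = {v,y}"
    proof (cases "v = a")
      case True thus ?thesis using e ab by (intro bexI[of _ b]) auto
    next
      case False hence "v = b" using e ab by auto
      thus ?thesis using e ab by (intro bexI[of _ a]) (auto simp: insert_commute)
    qed
  qed
  thus ?thesis by (simp add: bij_betw_same_card)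
qed

lemma degree_adj:
  assumes sg: "simple_graph E"
  shows "real (degree E v) = (\<Sum>y\<in>(UNIV::'v::finite set). adj E v y)"
proof -
  have "degree E v = card {e\<in>E. v\<in>e \<and> True}" by (simp add: degree_def)
  also have "\<dots> = card {y. {v,y}\<in>E \<and> v\<noteq>y}" using card_deg[OF sg, of v "\<lambda>_. True"] by simp
  finally show ?thesis by (simp add: adj_def sum.If_cases)
qed

lemma induced_degree_adj:
  fixes B :: "'v::finite set"
  assumes sg: "simple_graph E" and vB: "v \<in> B"
  shows "real (degree (induced_edges E B) v) = (\<Sum>y\<in>B. adj E v y)"
proof -
  have "degree (induced_edges E B) v = card {e\<in>E. v\<in>e \<and> e \<subseteq> B}"
    by (simp add: degree_def induced_edges_def conj_commute) (metis (lifting) conj_commute)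
  also have "\<dots> = card {y. {v,y}\<in>E \<and> v\<noteq>y \<and> {v,y} \<subseteq> B}" using card_deg[OF sg, of v "\<lambda>e. e \<subseteq> B"] by simp
  also have "{y. {v,y}\<in>E \<and> v\<noteq>y \<and> {v,y} \<subseteq> B} = {y\<in>B. {v,y}\<in>E \<and> v\<noteq>y}" using vB by auto
  finally have "real (degree (induced_edges E B) v) = (\<Sum>y\<in>{y\<in>B. {v,y}\<in>E \<and> v\<noteq>y}. 1)" by simp
  also have "\<dots> = (\<Sum>y\<in>B. if {v,y}\<in>E \<and> v\<noteq>y then 1 else 0)" using sum.inter_filter[OF finite[of B], of "\<lambda>_. 1::real" "\<lambda>y. {v,y}\<in>E \<and> v\<noteq>y"] by simp
  finally show ?thesis by (simp add: adj_def)
qed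

lemma energy_adj:
  fixes E :: "('v::finite) set set" and f :: "real^'v"
  assumes sg: "simple_graph E"
  shows "(\<Sum>e\<in>E. (\<Sum>(x,y)\<in>{(x,y). x \<in> e \<and> y \<in> e \<and> x \<noteq> y}. (f $ x - f $ y)^2) / 2)
       = (\<Sum>x\<in>UNIV. \<Sum>y\<in>UNIV. adj E x y * (f$x - f$y)^2) / 2"
proof -
  define P where "P e = {(x,y). x \<in> e \<and> y \<in> e \<and> x \<noteq> y}" for e :: "'v set"
  define h where "h = (\<lambda>(x,y). (f $ x - f $ y)^2)"
  define Q where "Q = {(x,y). {x,y} \<in> E \<and> x \<noteq> y}"
  have eq2: "e = {x,y}" if "e \<in> E" "x \<in> e" "y \<in> e" "x \<noteq> y" for e x y
  proof -
    have "card e = 2" using sg that by (auto simp: simple_graph_def)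
    then obtain a b where "e = {a,b}" "a \<noteq> b" by (auto simp: card_2_iff)
    thus ?thesis using that by auto
  qed
  have U: "(\<Union>e\<in>E. P e) = Q"
  proof
    show "(\<Union>e\<in>E. P e) \<subseteq> Q"
    proof
      fix p assume "p \<in> (\<Union>e\<in>E. P e)"
      then obtain e x y where "e \<in> E" "p = (x,y)" "x \<in> e" "y \<in> e" "x \<noteq> y" unfolding P_def by blast
      thus "p \<in> Q" using eq2[of e x y] unfolding Q_def by simp
    qed
    show "Q \<subseteq> (\<Union>e\<in>E. P e)"
    proof
      fix p assume "p \<in> Q"
      then obtain x y where "p = (x,y)" "{x,y} \<in> E" "x \<noteq> y" unfolding Q_def by blast
      thus "p \<in> (\<Union>e\<in>E. P e)" unfolding P_def by blast
    qed
  qed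
  have "(\<Sum>e\<in>E. sum h (P e)) = sum h (\<Union>e\<in>E. P e)"
    by (rule sum.UNION_disjoint[symmetric]) (auto simp: P_def dest: eq2)
  also have "\<dots> = sum h Q" using U by simp
  also have "\<dots> = (\<Sum>p\<in>UNIV. if p \<in> Q then h p else 0)" by (simp add: sum.If_cases)
  also have "\<dots> = (\<Sum>x\<in>UNIV. \<Sum>y\<in>UNIV. adj E x y * (f$x - f$y)^2)"
  proof -
    have "(\<Sum>x\<in>UNIV. \<Sum>y\<in>UNIV. adj E x y * (f$x - f$y)^2) = (\<Sum>(x,y)\<in>UNIV \<times> UNIV. adj E x y * (f$x - f$y)^2)"
      by (rule sum.cartesian_product)
    also have "\<dots> = (\<Sum>p\<in>UNIV. if p \<in> Q then h p else 0)"
      unfolding UNIV_Times_UNIV by (intro sum.cong refl) (auto simp: Q_def h_def adj_def split: if_splits)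
    finally show ?thesis by simp
  qed
  finally have "(\<Sum>e\<in>E. sum h (P e)) = (\<Sum>x\<in>UNIV. \<Sum>y\<in>UNIV. adj E x y * (f$x - f$y)^2)" .
  thus ?thesis unfolding P_def h_def by (simp add: sum_divide_distrib[symmetric])
qed



definition Mx :: "'v set set \<Rightarrow> 'v \<Rightarrow> 'v \<Rightarrow> real" where
  "Mx E x y = (if x = y then real (degree E x) else 0) - adj E x y"

definition Mop :: "'v set set \<Rightarrow> ('v::finite) set \<Rightarrow> real^'v \<Rightarrow> real^'v" where
  "Mop E B f = (\<chi> x. if x\<in>B then (\<Sum>y\<in>B. Mx E x y * f$y) else 0)"

lemma Mx_sym: "Mx E x y = Mx E y x" by (simp add: Mx_def adj_sym)

lemma sum_UNIV_restrict:
  fixes g :: "'v::finite \<Rightarrow> real"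
  assumes "\<And>x. x \<notin> B \<Longrightarrow> g x = 0"
  shows "(\<Sum>x\<in>UNIV. g x) = (\<Sum>x\<in>B. g x)"
  by (rule sum.mono_neutral_right) (auto simp: assms)

lemma Mop_linear: "linear (Mop E B)"
  by (rule linearI) (simp_all add: Mop_def vec_eq_iff sum.distrib sum_distrib_left algebra_simps)

lemma Mop_inner: "Mop E B f \<bullet> g = (\<Sum>x\<in>B. \<Sum>y\<in>B. Mx E x y * f$y * g$x)"
proof -
  have "Mop E B f \<bullet> g = (\<Sum>x\<in>UNIV. (Mop E B f)$x * g$x)" by (simp add: inner_vec_def)
  also have "\<dots> = (\<Sum>x\<in>B. (Mop E B f)$x * g$x)" by (rule sum_UNIV_restrict) (simp add: Mop_def)
  also have "\<dots> = (\<Sum>x\<in>B. \<Sum>y\<in>B. Mx E x y * f$y * g$x)" by (simp add: Mop_def sum_distrib_right)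
  finally show ?thesis .
qed

lemma Mop_sym: "Mop E B f \<bullet> g = f \<bullet> Mop E B g"
proof -
  have "Mop E B f \<bullet> g = (\<Sum>x\<in>B. \<Sum>y\<in>B. Mx E x y * f$y * g$x)" by (rule Mop_inner)
  also have "\<dots> = (\<Sum>y\<in>B. \<Sum>x\<in>B. Mx E x y * f$y * g$x)" by (rule sum.swap)
  also have "\<dots> = (\<Sum>y\<in>B. \<Sum>x\<in>B. Mx E y x * g$x * f$y)" by (simp add: Mx_sym mult.commute mult.left_commute)
  also have "\<dots> = Mop E B g \<bullet> f" by (rule Mop_inner[symmetric])
  finally show ?thesis by (simp add: inner_commute)
qed

lemma quad_form:
  fixes E :: "('v::finite) set set" and f :: "real^'v"
  assumes sg: "simple_graph E" and fB: "\<And>x. x \<notin> B \<Longrightarrow> f$x = 0"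
  shows "(\<Sum>x\<in>UNIV. \<Sum>y\<in>UNIV. adj E x y * (f$x - f$y)^2) / 2 = f \<bullet> Mop E B f"
proof -
  define D where "D x = real (degree E x)" for x
  have D: "D x = (\<Sum>y\<in>UNIV. adj E x y)" for x unfolding D_def by (rule degree_adj[OF sg])
  have T1: "(\<Sum>x\<in>UNIV. \<Sum>y\<in>UNIV. adj E x y * (f$x)^2) = (\<Sum>x\<in>UNIV. D x * (f$x)^2)"
    by (simp add: D sum_distrib_right)
  have T2: "(\<Sum>x\<in>UNIV. \<Sum>y\<in>UNIV. adj E x y * (f$y)^2) = (\<Sum>x\<in>UNIV. D x * (f$x)^2)"
    by (subst sum.swap) (simp add: D sum_distrib_right adj_sym)
  have "(\<Sum>x\<in>UNIV. \<Sum>y\<in>UNIV. adj E x y * (f$x - f$y)^2)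
      = (\<Sum>x\<in>UNIV. \<Sum>y\<in>UNIV. adj E x y * (f$x)^2) + (\<Sum>x\<in>UNIV. \<Sum>y\<in>UNIV. adj E x y * (f$y)^2)
        - 2 * (\<Sum>x\<in>UNIV. \<Sum>y\<in>UNIV. adj E x y * f$x * f$y)"
    by (simp add: power2_diff algebra_simps sum.distrib sum_subtractf sum_distrib_left)
  hence e1: "(\<Sum>x\<in>UNIV. \<Sum>y\<in>UNIV. adj E x y * (f$x - f$y)^2) / 2
     = (\<Sum>x\<in>UNIV. D x * (f$x)^2) - (\<Sum>x\<in>UNIV. \<Sum>y\<in>UNIV. adj E x y * f$x * f$y)"
    using T1 T2 by simp
  have r1: "(\<Sum>x\<in>UNIV. D x * (f$x)^2) = (\<Sum>x\<in>B. D x * (f$x)^2)"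
    by (rule sum_UNIV_restrict) (simp add: fB)
  have r2: "(\<Sum>x\<in>UNIV. \<Sum>y\<in>UNIV. adj E x y * f$x * f$y) = (\<Sum>x\<in>B. \<Sum>y\<in>B. adj E x y * f$x * f$y)"
  proof -
    have "(\<Sum>x\<in>UNIV. \<Sum>y\<in>UNIV. adj E x y * f$x * f$y) = (\<Sum>x\<in>B. \<Sum>y\<in>UNIV. adj E x y * f$x * f$y)"
      by (rule sum_UNIV_restrict) (simp add: fB)
    also have "\<dots> = (\<Sum>x\<in>B. \<Sum>y\<in>B. adj E x y * f$x * f$y)"
      by (intro sum.cong refl sum_UNIV_restrict) (simp add: fB)
    finally show ?thesis .
  qed
  have "f \<bullet> Mop E B f = Mop E B f \<bullet> f" by (simp add: inner_commute)
  also have "\<dots> = (\<Sum>x\<in>B. \<Sum>y\<in>B. Mx E x y * f$y * f$x)" by (rule Mop_inner)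
  also have "\<dots> = (\<Sum>x\<in>B. D x * (f$x)^2 - (\<Sum>y\<in>B. adj E x y * f$x * f$y))"
  proof (rule sum.cong[OF refl])
    fix x assume xB: "x \<in> B"
    have "(\<Sum>y\<in>B. Mx E x y * f$y * f$x) = (\<Sum>y\<in>B. (if x = y then D x * f$y * f$x else 0)) - (\<Sum>y\<in>B. adj E x y * f$x * f$y)"
    proof -
      have pt: "\<And>y. Mx E x y * f$y * f$x = (if x = y then D x * f$y * f$x else 0) - adj E x y * f$x * f$y"
        by (simp add: Mx_def D_def algebra_simps)
      show ?thesis by (simp only: pt sum_subtractf)
    qed
    also have "(\<Sum>y\<in>B. (if x = y then D x * f$y * f$x else 0)) = D x * (f$x)^2"
      using xB by (simp add: power2_eq_square)
    finally show "(\<Sum>y\<in>B. Mx E x y * f$y * f$x) = D x * (f$x)^2 - (\<Sum>y\<in>B. adj E x y * f$x * f$y)" .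
  qed
  also have "\<dots> = (\<Sum>x\<in>B. D x * (f$x)^2) - (\<Sum>x\<in>B. \<Sum>y\<in>B. adj E x y * f$x * f$y)"
    by (simp add: sum_subtractf)
  finally show ?thesis using e1 r1 r2 by simp
qed

lemma rq_bound:
  fixes Aop :: "'a::euclidean_space \<Rightarrow> 'a"
  assumes lin: "linear Aop" and fin: "finite Uk" and orth: "pairwise orthogonal Uk"
    and nrm: "\<And>u. u \<in> Uk \<Longrightarrow> norm u = 1"
    and eig: "\<And>u. u \<in> Uk \<Longrightarrow> Aop u = lam u *\<^sub>R u"
    and le: "\<And>u. u \<in> Uk \<Longrightarrow> lam u \<le> t"
    and f: "f \<in> span Uk"
  shows "f \<bullet> Aop f \<le> t * (f \<bullet> f)"
proof -
  have fe: "(\<Sum>u\<in>Uk. (f \<bullet> u) *\<^sub>R u) = f" using orthonormal_basis_expand[OF orth _ f fin] nrm by blast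
  have "Aop f = (\<Sum>u\<in>Uk. (f \<bullet> u) *\<^sub>R Aop u)"
    by (subst fe[symmetric]) (simp add: linear_sum[OF lin] linear_scale[OF lin])
  also have "\<dots> = (\<Sum>u\<in>Uk. ((f \<bullet> u) * lam u) *\<^sub>R u)" by (intro sum.cong refl) (simp add: eig)
  finally have Af: "Aop f = (\<Sum>u\<in>Uk. ((f \<bullet> u) * lam u) *\<^sub>R u)" .
  have "f \<bullet> Aop f = (\<Sum>u\<in>Uk. (f \<bullet> u) * lam u * (f \<bullet> u))" unfolding Af by (simp add: inner_sum_right)
  also have "\<dots> \<le> (\<Sum>u\<in>Uk. t * ((f \<bullet> u) * (f \<bullet> u)))"
  proof (rule sum_mono)
    fix u assume "u \<in> Uk"
    hence "lam u * ((f \<bullet> u) * (f \<bullet> u)) \<le> t * ((f \<bullet> u) * (f \<bullet> u))" using le by (intro mult_right_mono) auto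
    thus "(f \<bullet> u) * lam u * (f \<bullet> u) \<le> t * ((f \<bullet> u) * (f \<bullet> u))" by (simp add: algebra_simps)
  qed
  also have "\<dots> = t * (f \<bullet> (\<Sum>u\<in>Uk. (f \<bullet> u) *\<^sub>R u))" by (simp add: inner_sum_right sum_distrib_left)
  also have "\<dots> = t * (f \<bullet> f)" using fe by simp
  finally show ?thesis .
qed


theorem mainTheorem10:
  fixes E :: "('v::finite) set set" and B :: "'v set" and k :: nat
  assumes "simple_graph E"
    and "card B \<ge> 2"
    and "1 \<le> k" and "k \<le> card B"
  defines "S1 \<equiv> real (\<Sum>v\<in>B. degree E v)"
    and "S2 \<equiv> real (\<Sum>v\<in>B. (degree E v)^2)"
    and "S1' \<equiv> real (\<Sum>v\<in>B. degree (induced_edges E B) v)"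
    and "b \<equiv> real (card B)"
  shows "steklov_eig E B k
           \<le> ereal ((S1 + sqrt ((real k - 1) / (b - real k + 1) * (b * (S2 + S1') - S1^2))) / b)
       \<and> (S1 + sqrt ((real k - 1) / (b - real k + 1) * (b * (S2 + S1') - S1^2))) / b
           \<le> (S1 + sqrt ((real k - 1) / (b - real k + 1) * (b * (S2 + S1) - S1^2))) / b"
proof
  note sg = assms(1)
  have b0: "b > 0" using assms(2) unfolding b_def by simp
  define t where "t = (S1 + sqrt ((real k - 1) / (b - real k + 1) * (b * (S2 + S1') - S1^2))) / b"
  define S where "S = {f :: real^'v. \<forall>x. x \<notin> B \<longrightarrow> f$x = 0}"
  have subS: "subspace S" unfolding S_def subspace_def by auto
  have invS: "Mop E B f \<in> S" for f unfolding S_def Mop_def by simp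
  obtain U where U: "U \<subseteq> S" "pairwise orthogonal U" "\<forall>u\<in>U. norm u = 1" "S \<subseteq> span U"
      "\<forall>u\<in>U. Mop E B u = (u \<bullet> Mop E B u) *\<^sub>R u"
    using spectral_aux[OF Mop_linear Mop_sym subS invS] by blast
  have finU: "finite U" using U(2) pairwise_orthogonal_imp_finite by blast
  have tf: "card U = card B" "(\<Sum>u\<in>U. u \<bullet> Mop E B u) = (\<Sum>x\<in>B. Mx E x x)"
    "(\<Sum>u\<in>U. (u \<bullet> Mop E B u)^2) = (\<Sum>x\<in>B. \<Sum>y\<in>B. (Mx E x y)^2)"
    using trace_facts[of "Mop E B" B "Mx E" U, OF Mop_def] U unfolding S_def by blast+
  have T1: "(\<Sum>x\<in>B. Mx E x x) = S1" unfolding S1_def by (simp add: Mx_def)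
  have T2: "(\<Sum>x\<in>B. \<Sum>y\<in>B. (Mx E x y)^2) = S2 + S1'"
  proof -
    have pt: "(Mx E x y)^2 = (if x = y then (real (degree E x))^2 else 0) + adj E x y" for x y
      by (cases "x = y") (simp_all add: Mx_def adj_sq)
    have "(\<Sum>x\<in>B. \<Sum>y\<in>B. (Mx E x y)^2) = (\<Sum>x\<in>B. (real (degree E x))^2 + (\<Sum>y\<in>B. adj E x y))"
      by (intro sum.cong refl) (simp add: pt sum.distrib)
    also have "\<dots> = (\<Sum>x\<in>B. (real (degree E x))^2 + real (degree (induced_edges E B) x))"
      by (intro sum.cong refl) (simp add: induced_degree_adj[OF sg])
    also have "\<dots> = S2 + S1'" unfolding S2_def S1'_def by (simp add: sum.distrib)
    finally show ?thesis .
  qed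
  have kU: "k \<le> card U" using tf(1) assms(4) by simp
  have "k \<le> card {u\<in>U. u \<bullet> Mop E B u \<le> t}"
    using ws_count[OF finU assms(3) kU, of "\<lambda>u. u \<bullet> Mop E B u"] tf T1 T2
    unfolding t_def b_def by simp
  then obtain Uk where Uk: "Uk \<subseteq> {u\<in>U. u \<bullet> Mop E B u \<le> t}" "card Uk = k"
    by (meson obtain_subset_with_card_n)
  have UkU: "Uk \<subseteq> U" using Uk(1) by auto
  have finUk: "finite Uk" using finU UkU finite_subset by blast
  have orthk: "pairwise orthogonal Uk" using U(2) UkU pairwise_subset by blast
  have "0 \<notin> Uk" using U(3) UkU by (metis norm_zero subsetD zero_neq_one)
  hence indk: "independent Uk" by (rule pairwise_orthogonal_independent[OF orthk])
  define W where "W = span Uk"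
  have Wsub: "subspace W" "dim W = k" unfolding W_def
    using subspace_span dim_span_eq_card_independent[OF indk] Uk(2) by auto
  have WS: "W \<subseteq> S" unfolding W_def using UkU U(1) subS by (meson span_minimal subset_trans)
  have "steklov_eig E B k \<le> (SUP f\<in>W - {0}. rayleigh E B f)"
    unfolding steklov_eig_def using Wsub by (intro INF_lower) auto
  also have "\<dots> \<le> ereal t"
  proof (rule SUP_least)
    fix f assume fW: "f \<in> W - {0}"
    hence fS: "\<And>x. x \<notin> B \<Longrightarrow> f$x = 0" using WS unfolding S_def by auto
    have ff: "f \<bullet> f = (\<Sum>x\<in>B. (f$x)^2)"
      unfolding inner_vec_def by (simp add: power2_eq_square) (rule sum_UNIV_restrict, simp add: fS)
    have fpos: "f \<bullet> f > 0" using fW by simp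
    have nz: "\<not> (\<forall>x\<in>B. f$x = 0)"
    proof
      assume "\<forall>x\<in>B. f$x = 0"
      hence "f = 0" using fS by (auto simp: vec_eq_iff)
      thus False using fW by simp
    qed
    have en: "(\<Sum>e\<in>E. (\<Sum>(x,y)\<in>{(x,y). x \<in> e \<and> y \<in> e \<and> x \<noteq> y}. (f $ x - f $ y)^2) / 2) = f \<bullet> Mop E B f"
      using energy_adj[OF sg, of f] quad_form[OF sg fS] by simp
    have le: "f \<bullet> Mop E B f \<le> t * (f \<bullet> f)"
      using rq_bound[OF Mop_linear[of E B] finUk orthk, where lam="\<lambda>u. u \<bullet> Mop E B u" and t=t and f=f] U(3,5) UkU Uk(1) fW
      unfolding W_def by auto
    have "rayleigh E B f = ereal ((f \<bullet> Mop E B f) / (f \<bullet> f))"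
      unfolding rayleigh_def using nz en ff by simp
    also have "\<dots> \<le> ereal t" using le fpos by (simp add: pos_divide_le_eq)
    finally show "rayleigh E B f \<le> ereal t" .
  qed
  finally show "steklov_eig E B k \<le> ereal t" .
next
  have b0: "b > 0" using assms(2) unfolding b_def by simp
  have S1'le: "S1' \<le> S1" unfolding S1'_def S1_def
  proof -
    have "(\<Sum>v\<in>B. degree (induced_edges E B) v) \<le> (\<Sum>v\<in>B. degree E v)"
      unfolding degree_def induced_edges_def by (intro sum_mono card_mono) auto
    thus "real (\<Sum>v\<in>B. degree (induced_edges E B) v) \<le> real (\<Sum>v\<in>B. degree E v)" by linarith
  qed
  have c0: "0 \<le> (real k - 1) / (b - real k + 1)" using assms(3,4) unfolding b_def by simp
  have "(real k - 1) / (b - real k + 1) * (b * (S2 + S1') - S1^2) \<le> (real k - 1) / (b - real k + 1) * (b * (S2 + S1) - S1^2)"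
    using c0 b0 S1'le by (intro mult_left_mono) auto
  hence "sqrt ((real k - 1) / (b - real k + 1) * (b * (S2 + S1') - S1^2)) \<le> sqrt ((real k - 1) / (b - real k + 1) * (b * (S2 + S1) - S1^2))"
    by simp
  thus "(S1 + sqrt ((real k - 1) / (b - real k + 1) * (b * (S2 + S1') - S1^2))) / b
           \<le> (S1 + sqrt ((real k - 1) / (b - real k + 1) * (b * (S2 + S1) - S1^2))) / b"
    using b0 by (intro divide_right_mono) auto
qed

end
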